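(* Let $X$ be a continuous random variable with finite support $[a,b]$. For each $n$, let $X_1, \dots, X_n$ be i.i.d. samples from $X$ and let $X_{(1)} \le X_{(2)} \le \dots \le X_{(n)}$ denote their order statistics. Then $E[X_{(k+1)} - X_{(k)}] \to 0$ as $n \to \infty$ uniformly in $k$; that is, for every $\varepsilon > 0$ there exists $N$ such that for all $n > N$ and all $1 \le k \le n-1$, $E[X_{(k+1)} - X_{(k)}] < \varepsilon$. *)

theory Defs
  imports "HOL-Probability.Probability"
begin

definition measure_support :: "real measure \<Rightarrow> real set" where
  "measure_support \<mu> = {x. \<forall>U. open U \<and> x \<in> U \<longrightarrow> emeasure \<mu> U > 0}"

definition order_stat :: "nat \<Rightarrow> nat \<Rightarrow> (nat \<Rightarrow> real) \<Rightarrow> real" where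
  "order_stat n k \<omega> = sort (map \<omega> [0..<n]) ! (k - 1)"

end

theory Submission
  imports Defs
begin

lemma compact_null:
  fixes D :: "real measure"
  assumes sD: "sets D = sets borel" and K: "compact K" and dis: "K \<inter> measure_support D = {}"
  shows "K \<in> null_sets D"
proof -
  have "\<forall>x\<in>K. \<exists>U. open U \<and> x \<in> U \<and> emeasure D U = 0"
  proof
    fix x assume "x \<in> K"
    then have "x \<notin> measure_support D" using dis by auto
    then show "\<exists>U. open U \<and> x \<in> U \<and> emeasure D U = 0"
      unfolding measure_support_def by (auto simp: not_gr_zero)
  qed
  then obtain U where U: "\<And>x. x \<in> K \<Longrightarrow> open (U x) \<and> x \<in> U x \<and> emeasure D (U x) = 0"
    by metis
  have "K \<subseteq> (\<Union>x\<in>K. U x)" using U by auto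
  then obtain F where F: "F \<subseteq> K" "finite F" "K \<subseteq> (\<Union>x\<in>F. U x)"
    using compactE_image[OF K, of K U] U by metis
  have "(\<Union>x\<in>F. U x) \<in> null_sets D"
    using F U by (intro null_sets.finite_UN) (auto simp: null_sets_def sD borel_open)
  moreover have "K \<in> sets D" using K sD by (simp add: borel_compact)
  ultimately show ?thesis using F(3) null_sets_subset by blast
qed

lemma below_null:
  fixes D :: "real measure"
  assumes sD: "sets D = sets borel" and S: "measure_support D = {a..b}"
  shows "{..<a} \<in> null_sets D" "{b<..} \<in> null_sets D"
proof -
  have "(\<Union>j::nat. {a - real (Suc j) .. a - 1/real (Suc j)}) \<in> null_sets D"
    by (intro null_sets_UN compact_null[OF sD]) (auto simp: S)
  moreover have "{..<a} \<subseteq> (\<Union>j::nat. {a - real (Suc j) .. a - 1/real (Suc j)})"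
  proof
    fix x assume "x \<in> {..<a}"
    then have "a - x > 0" by simp
    obtain j1 :: nat where "inverse (real (Suc j1)) < a - x" using reals_Archimedean[OF \<open>a - x > 0\<close>] by blast
    then have "1 / real (Suc j1) < a - x" by (simp add: inverse_eq_divide)
    obtain j2 :: nat where "a - x < real j2" using reals_Archimedean2 by blast
    let ?j = "max j1 j2"
    have "1 / real (Suc ?j) \<le> 1 / real (Suc j1)" by (intro divide_left_mono) auto
    moreover have "real j2 \<le> real (Suc ?j)" by simp
    ultimately have "x \<in> {a - real (Suc ?j) .. a - 1/real (Suc ?j)}"
      using \<open>1 / real (Suc j1) < a - x\<close> \<open>a - x < real j2\<close> by auto
    then show "x \<in> (\<Union>j::nat. {a - real (Suc j) .. a - 1/real (Suc j)})" by blast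
  qed
  moreover have "{..<a} \<in> sets D" by (simp add: sD)
  ultimately show "{..<a} \<in> null_sets D" by (metis null_sets_subset)
  have "(\<Union>j::nat. {b + 1/real (Suc j) .. b + real (Suc j)}) \<in> null_sets D"
    by (intro null_sets_UN compact_null[OF sD]) (auto simp: S)
  moreover have "{b<..} \<subseteq> (\<Union>j::nat. {b + 1/real (Suc j) .. b + real (Suc j)})"
  proof
    fix x assume "x \<in> {b<..}"
    then have "x - b > 0" by simp
    obtain j1 :: nat where "inverse (real (Suc j1)) < x - b" using reals_Archimedean[OF \<open>x - b > 0\<close>] by blast
    then have "1 / real (Suc j1) < x - b" by (simp add: inverse_eq_divide)
    obtain j2 :: nat where "x - b < real j2" using reals_Archimedean2 by blast
    let ?j = "max j1 j2"
    have "1 / real (Suc ?j) \<le> 1 / real (Suc j1)" by (intro divide_left_mono) auto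
    moreover have "real j2 \<le> real (Suc ?j)" by simp
    ultimately have "x \<in> {b + 1/real (Suc ?j) .. b + real (Suc ?j)}"
      using \<open>1 / real (Suc j1) < x - b\<close> \<open>x - b < real j2\<close> by auto
    then show "x \<in> (\<Union>j::nat. {b + 1/real (Suc j) .. b + real (Suc j)})" by blast
  qed
  moreover have "{b<..} \<in> sets D" by (simp add: sD)
  ultimately show "{b<..} \<in> null_sets D" by (metis null_sets_subset)
qed

lemma gap_bound:
  fixes s :: "real list" and a b :: real and m :: nat
  assumes srt: "sorted s" and len: "Suc i < length s" and rng: "\<forall>x\<in>set s. a \<le> x \<and> x \<le> b"
    and m: "m > 0"
    and cov: "\<forall>j<m. \<exists>x\<in>set s. a + real j * ((b-a)/m) < x \<and> x < a + real (Suc j) * ((b-a)/m)"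
  shows "s!(Suc i) - s!i \<le> 2*((b-a)/m)"
proof (rule ccontr)
  define \<delta> where "\<delta> = (b-a)/m"
  define x where "x = s!i"
  define y where "y = s!(Suc i)"
  assume "\<not> ?thesis"
  then have gap: "y - x > 2*\<delta>" unfolding x_def y_def \<delta>_def by simp
  have xin: "x \<in> set s" "y \<in> set s" using len unfolding x_def y_def by auto
  then have ab: "a \<le> x" "y \<le> b" using rng by auto
  have xy: "x \<le> y" using srt len unfolding x_def y_def by (simp add: sorted_nth_mono)
  have "a \<le> b" using ab xy by simp
  then have d0: "\<delta> \<ge> 0" unfolding \<delta>_def by simp
  have dpos: "\<delta> > 0"
  proof (rule ccontr)
    assume "\<not> \<delta> > 0" then have "\<delta> = 0" using d0 by simp
    then have "b = a" unfolding \<delta>_def using m by simp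
    then show False using gap ab xy \<open>\<delta> = 0\<close> by simp
  qed
  define t where "t = (x - a)/\<delta>"
  have t0: "t \<ge> 0" unfolding t_def using ab dpos by simp
  define j where "j = nat \<lfloor>t\<rfloor> + 1"
  have rj: "real j = of_int \<lfloor>t\<rfloor> + 1" unfolding j_def using t0 by simp
  have ft: "of_int \<lfloor>t\<rfloor> \<le> t" "t < of_int \<lfloor>t\<rfloor> + 1" by linarith+
  have xt: "x = a + t * \<delta>" unfolding t_def using dpos by simp
  have l1: "a + real j * \<delta> > x" unfolding xt rj using ft(2) dpos
    by (simp add: mult_strict_right_mono)
  have "real (Suc j) * \<delta> \<le> (t + 2) * \<delta>" using ft(1) dpos rj
    by (intro mult_right_mono) auto
  then have l2: "a + real (Suc j) * \<delta> < y" using gap xt by (simp add: algebra_simps)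
  have md: "real m * \<delta> = b - a" unfolding \<delta>_def using m by simp
  have "real (Suc j) * \<delta> < real m * \<delta>"
    using l2 ab md by linarith
  then have "j < m" using dpos by (simp add: mult_less_cancel_right)
  then obtain z where z: "z \<in> set s" "a + real j * \<delta> < z" "z < a + real (Suc j) * \<delta>"
    using cov unfolding \<delta>_def by blast
  then obtain l where l: "l < length s" "z = s!l" by (metis in_set_conv_nth)
  show False
  proof (cases "l \<le> i")
    case True
    then have "z \<le> x" unfolding x_def l(2) using srt len by (simp add: sorted_nth_mono)
    then show False using z l1 by simp
  next
    case False
    then have "z \<ge> y" unfolding y_def l(2) using srt l by (simp add: sorted_nth_mono)
    then show False using z l2 by simp
  qed
qed

lemma os_facts:
  fixes \<omega> :: "nat \<Rightarrow> real" and m :: nat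
  assumes rng: "\<forall>i<n. \<omega> i \<in> {a..b}" and k: "1 \<le> k" "k \<le> n - 1"
  shows "order_stat n (k + 1) \<omega> - order_stat n k \<omega> \<le> b - a"
    and "m > 0 \<Longrightarrow> \<forall>j<m. \<exists>i<n. a + real j * ((b-a)/m) < \<omega> i \<and> \<omega> i < a + real (Suc j) * ((b-a)/m)
       \<Longrightarrow> order_stat n (k + 1) \<omega> - order_stat n k \<omega> \<le> 2*((b-a)/m)"
proof -
  define s where "s = sort (map \<omega> [0..<n])"
  have len: "length s = n" unfolding s_def by simp
  have set_s: "set s = \<omega> ` {..<n}" unfolding s_def by auto
  have srt: "sorted s" unfolding s_def by simp
  have rs: "\<forall>x\<in>set s. a \<le> x \<and> x \<le> b" using rng set_s by auto
  have e1: "order_stat n (k + 1) \<omega> = s ! Suc (k - 1)" unfolding order_stat_def s_def using k by simp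
  have e2: "order_stat n k \<omega> = s ! (k - 1)" unfolding order_stat_def s_def by simp
  have kl: "Suc (k - 1) < length s" using k len by simp
  show "order_stat n (k + 1) \<omega> - order_stat n k \<omega> \<le> b - a"
    unfolding e1 e2 using rs kl by (metis diff_mono nth_mem Suc_lessD)
  assume m: "m > 0" and cov: "\<forall>j<m. \<exists>i<n. a + real j * ((b-a)/m) < \<omega> i \<and> \<omega> i < a + real (Suc j) * ((b-a)/m)"
  have "\<forall>j<m. \<exists>x\<in>set s. a + real j * ((b-a)/m) < x \<and> x < a + real (Suc j) * ((b-a)/m)"
    using cov set_s by fastforce
  then show "order_stat n (k + 1) \<omega> - order_stat n k \<omega> \<le> 2*((b-a)/m)"
    unfolding e1 e2 using gap_bound[OF srt kl rs m] by blast
qed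

lemma main_bound:
  fixes D :: "real measure" and a b :: real and m n k :: nat
  assumes D: "prob_space D" and sD: "sets D = sets borel" and S: "measure_support D = {a..b}"
    and k: "1 \<le> k" "k \<le> n - 1" and m: "m > 0"
  defines "J \<equiv> \<lambda>j::nat. {a + real j * ((b-a)/m) <..< a + real (Suc j) * ((b-a)/m)}"
  shows "(\<integral>\<omega>. order_stat n (k + 1) \<omega> - order_stat n k \<omega> \<partial>(PiM {..<n} (\<lambda>_. D)))
          \<le> 2*((b-a)/m) + (b - a) * (\<Sum>j<m. (1 - measure D (J j)) ^ n)"
proof -
  interpret D: prob_space D by fact
  let ?P = "PiM {..<n} (\<lambda>_. D)"
  interpret P: prob_space ?P by (intro prob_space_PiM D)
  interpret PP: product_prob_space "\<lambda>_. D" "{..<n}"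
    by (simp add: product_prob_space_def product_prob_space_axioms_def product_sigma_finite_def
        D prob_space_imp_sigma_finite)
  have spD: "space D = UNIV" using sD by (metis sets_eq_imp_space_eq space_borel)
  have Jm: "J j \<in> sets D" for j unfolding J_def sD by simp
  have Jcm: "UNIV - J j \<in> sets D" for j using sets.compl_sets[OF Jm] spD by simp
  define B where "B = (\<lambda>j. PiE {..<n} (\<lambda>_. UNIV - J j))"
  have Bm: "B j \<in> sets ?P" for j unfolding B_def
    using Jcm by (intro sets_PiM_I_finite) auto
  have mB: "measure ?P (B j) = (1 - measure D (J j)) ^ n" for j
  proof -
    have "emeasure ?P (B j) = (\<Prod>i\<in>{..<n}. emeasure D (UNIV - J j))"
      unfolding B_def using Jcm by (intro PP.emeasure_PiM) auto
    also have "\<dots> = ennreal ((1 - measure D (J j)) ^ n)"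
      using D.prob_compl[OF Jm] by (simp add: D.emeasure_eq_measure spD prod_ennreal ennreal_power D.prob_le_1)
    finally show ?thesis by (simp add: P.emeasure_eq_measure D.prob_compl[OF Jm] spD)
  qed
  have nullab: "{..<a} \<in> null_sets D" "{b<..} \<in> null_sets D" using below_null[OF sD S] by auto
  have cm: "UNIV - {a..b} \<in> sets D" using sets.compl_sets[of "{a..b}" D] spD sD by simp
  have nul: "UNIV - {a..b} \<in> null_sets D"
    using null_sets.Un[OF nullab] cm by (rule null_sets_subset) auto
  have "measure D (UNIV - {a..b}) = 0" using null_setsD1[OF nul] by (simp add: measure_def)
  moreover have "UNIV - (UNIV - {a..b}) = {a..b}" by auto
  ultimately have mab: "measure D {a..b} = 1" using D.prob_compl[OF cm] spD by simp
  have "emeasure ?P (PiE {..<n} (\<lambda>_. {a..b})) = (\<Prod>i\<in>{..<n}. emeasure D {a..b})"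
    by (intro PP.emeasure_PiM) (auto simp: sD)
  also have "\<dots> = 1" using mab by (simp add: D.emeasure_eq_measure)
  finally have "measure ?P (PiE {..<n} (\<lambda>_. {a..b})) = 1" by (simp add: P.emeasure_eq_measure)
  then have AEab: "AE \<omega> in ?P. \<omega> \<in> PiE {..<n} (\<lambda>_. {a..b})" by (rule P.AE_prob_1)
  define f where "f = (\<lambda>\<omega>. order_stat n (k + 1) \<omega> - order_stat n k \<omega>)"
  define g where "g = (\<lambda>\<omega>. 2*((b-a)/m) + (b - a) * (\<Sum>j<m. indicator (B j) \<omega>))"
  have ab: "a \<le> b"
  proof (rule ccontr)
    assume "\<not> a \<le> b"
    then have "{a..b} = {}" by simp
    with mab show False by simp
  qed
  have ii: "integrable ?P (indicator (B j) :: _ \<Rightarrow> real)" for j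
    using Bm by (intro integrable_real_indicator) (auto simp: P.emeasure_eq_measure)
  have isum: "integrable ?P (\<lambda>\<omega>. \<Sum>j<m. indicator (B j) \<omega> :: real)"
    by (rule Bochner_Integration.integrable_sum) (rule ii)
  have isum2: "integrable ?P (\<lambda>\<omega>. (b - a) * (\<Sum>j<m. indicator (B j) \<omega> :: real))"
    by (rule integrable_mult_right) (rule isum)
  have gint: "integrable ?P g" unfolding g_def
    by (rule Bochner_Integration.integrable_add) (rule P.integrable_const, rule isum2)
  have BI: "B j \<inter> space ?P = B j" for j using sets.sets_into_space[OF Bm[of j]] by blast
  have i1: "integral\<^sup>L ?P (\<lambda>\<omega>. \<Sum>j<m. indicator (B j) \<omega> :: real) = (\<Sum>j<m. (1 - measure D (J j)) ^ n)"
    by (subst Bochner_Integration.integral_sum[OF ii]) (rule sum.cong, simp_all add: BI mB)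
  have ig1: "integral\<^sup>L ?P g = integral\<^sup>L ?P (\<lambda>\<omega>. 2*((b-a)/m))
      + integral\<^sup>L ?P (\<lambda>\<omega>. (b - a) * (\<Sum>j<m. indicator (B j) \<omega> :: real))"
    unfolding g_def by (rule Bochner_Integration.integral_add[OF P.integrable_const isum2])
  have ig2: "integral\<^sup>L ?P (\<lambda>\<omega>. 2*((b-a)/m)) = 2*((b-a)/m)"
    using P.prob_space by (simp add: lebesgue_integral_const)
  have ig3: "integral\<^sup>L ?P (\<lambda>\<omega>. (b - a) * (\<Sum>j<m. indicator (B j) \<omega> :: real))
      = (b - a) * (\<Sum>j<m. (1 - measure D (J j)) ^ n)"
    by (subst Bochner_Integration.integral_mult_right_zero) (rule arg_cong[OF i1])
  have ig: "integral\<^sup>L ?P g = 2*((b-a)/m) + (b - a) * (\<Sum>j<m. (1 - measure D (J j)) ^ n)"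
    unfolding ig1 ig2 ig3 ..
  have "AE \<omega> in ?P. \<omega> \<in> PiE {..<n} (\<lambda>_. {a..b}) \<longrightarrow> f \<omega> \<le> g \<omega>"
  proof (rule AE_I2, rule impI)
    fix \<omega> assume sp: "\<omega> \<in> space ?P" and w: "\<omega> \<in> PiE {..<n} (\<lambda>_. {a..b})"
    have rng: "\<forall>i<n. \<omega> i \<in> {a..b}" using w by (simp add: PiE_iff)
    have sum0: "(\<Sum>j<m. indicator (B j) \<omega>) \<ge> (0::real)" by (simp add: sum_nonneg)
    show "f \<omega> \<le> g \<omega>"
    proof (cases "\<exists>j<m. \<omega> \<in> B j")
      case True
      then obtain j where j: "j < m" "\<omega> \<in> B j" by blast
      have "indicator (B j) \<omega> \<le> (\<Sum>j<m. indicator (B j) \<omega> :: real)"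
        by (rule member_le_sum) (use j in auto)
      then have "(1::real) \<le> (\<Sum>j<m. indicator (B j) \<omega>)" using j(2) by simp
      then have "(b - a) * 1 \<le> (b - a) * (\<Sum>j<m. indicator (B j) \<omega>)"
        using ab by (intro mult_left_mono) auto
      then have "b - a \<le> (b - a) * (\<Sum>j<m. indicator (B j) \<omega>)" by simp
      moreover have "0 \<le> 2*((b-a)/m)" using ab by simp
      ultimately show ?thesis using os_facts(1)[OF rng k] unfolding f_def g_def by linarith
    next
      case False
      have "\<forall>j<m. \<exists>i<n. \<omega> i \<in> J j"
      proof (intro allI impI)
        fix j assume "j < m"
        then have "\<omega> \<notin> B j" using False by blast
        moreover have "\<omega> \<in> PiE {..<n} (\<lambda>_. UNIV)" using sp by (simp add: space_PiM spD)
        ultimately show "\<exists>i<n. \<omega> i \<in> J j" unfolding B_def by (auto simp: PiE_iff)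
      qed
      then have "f \<omega> \<le> 2*((b-a)/m)" unfolding f_def
        by (intro os_facts(2)[OF rng k m]) (auto simp: J_def)
      moreover have "0 \<le> (b - a) * (\<Sum>j<m. indicator (B j) \<omega>)" using ab sum0 by simp
      ultimately show ?thesis unfolding g_def by linarith
    qed
  qed
  then have fg: "AE \<omega> in ?P. f \<omega> \<le> g \<omega>" using AEab by (rule AE_mp[rotated])
  show ?thesis
  proof (cases "integrable ?P f")
    case True
    have "integral\<^sup>L ?P f \<le> integral\<^sup>L ?P g"
      by (rule integral_mono_AE[OF True gint fg])
    then show ?thesis unfolding ig f_def .
  next
    case False
    then have "integral\<^sup>L ?P f = 0" by (rule not_integrable_integral_eq)
    moreover have "0 \<le> (b - a) * (\<Sum>j<m. (1 - measure D (J j)) ^ n)"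
      using ab D.prob_le_1 by (intro mult_nonneg_nonneg sum_nonneg) auto
    ultimately show ?thesis using ab unfolding f_def by simp
  qed
qed

theorem theorem2:
  fixes M :: "'a measure" and X :: "'a \<Rightarrow> real" and a b :: real
  assumes "prob_space M"
    and "X \<in> borel_measurable M"
    and "absolutely_continuous lborel (distr M borel X)"
    and "measure_support (distr M borel X) = {a..b}"
  shows "\<forall>\<epsilon>>0. \<exists>N. \<forall>n>N. \<forall>k. 1 \<le> k \<and> k \<le> n - 1 \<longrightarrow>
           (\<integral>\<omega>. order_stat n (k + 1) \<omega> - order_stat n k \<omega>
              \<partial>(PiM {..<n} (\<lambda>_. distr M borel X))) < \<epsilon>"
proof (intro allI impI)
  fix \<epsilon> :: real assume e: "\<epsilon> > 0"
  define D where "D = distr M borel X"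
  have D: "prob_space D" unfolding D_def
    using assms(1,2) by (intro prob_space.prob_space_distr) auto
  interpret D: prob_space D by (rule D)
  have sD: "sets D = sets borel" unfolding D_def by simp
  have S: "measure_support D = {a..b}" unfolding D_def by fact
  define m where "m = nat \<lceil>4*(b-a)/\<epsilon>\<rceil> + 1"
  have m: "m > 0" unfolding m_def by simp
  define J where "J = (\<lambda>j::nat. {a + real j * ((b-a)/m) <..< a + real (Suc j) * ((b-a)/m)})"
  define h where "h = (\<lambda>n. (b - a) * (\<Sum>j<m. (1 - measure D (J j)) ^ n))"
  have bnd: "(\<integral>\<omega>. order_stat n (k + 1) \<omega> - order_stat n k \<omega> \<partial>(PiM {..<n} (\<lambda>_. D)))
          \<le> 2*((b-a)/m) + h n" if "1 \<le> k" "k \<le> n - 1" for n k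
    unfolding h_def J_def by (rule main_bound[OF D sD S that m])
  show "\<exists>N. \<forall>n>N. \<forall>k. 1 \<le> k \<and> k \<le> n - 1 \<longrightarrow>
           (\<integral>\<omega>. order_stat n (k + 1) \<omega> - order_stat n k \<omega>
              \<partial>(PiM {..<n} (\<lambda>_. distr M borel X))) < \<epsilon>"
  proof (cases "a < b")
    case False
    have "h n \<le> 0" for n unfolding h_def using False D.prob_le_1
      by (intro mult_nonpos_nonneg sum_nonneg) auto
    moreover have "2*((b-a)/m) \<le> 0" using False by (simp add: divide_nonpos_nonneg)
    ultimately have hb: "2*((b-a)/m) + h n < \<epsilon>" for n using e by (smt (verit))
    show ?thesis
    proof (intro exI[of _ 0] allI impI)
      fix n k :: nat assume "0 < n" "1 \<le> k \<and> k \<le> n - 1"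
      then have "(\<integral>\<omega>. order_stat n (k + 1) \<omega> - order_stat n k \<omega> \<partial>(PiM {..<n} (\<lambda>_. D)))
          \<le> 2*((b-a)/m) + h n" using bnd by blast
      then show "(\<integral>\<omega>. order_stat n (k + 1) \<omega> - order_stat n k \<omega>
              \<partial>(PiM {..<n} (\<lambda>_. distr M borel X))) < \<epsilon>"
        using hb[of n] unfolding D_def by linarith
    qed
  next
    case True
    have pj: "0 < measure D (J j) \<and> measure D (J j) \<le> 1" if j: "j < m" for j
    proof
      define c where "c = a + (real j + 1/2) * ((b-a)/m)"
      have dpos: "(b-a)/m > 0" using True m by simp
      define d where "d = (b-a)/m"
      have dd: "d > 0" using dpos d_def by simp
      have "c \<in> J j" unfolding J_def c_def d_def[symmetric] using dd
        by (auto simp: algebra_simps)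
      have "c \<in> {a..b}"
      proof -
        have "real j + 1/2 \<le> real m" using j by linarith
        then have "(real j + 1/2) * ((b-a)/m) \<le> real m * ((b-a)/m)"
          using dpos by (intro mult_right_mono) auto
        also have "\<dots> = b - a" using m by simp
        finally have h1: "(real j + 1/2) * ((b-a)/m) \<le> b - a" .
        have h2: "0 \<le> (real j + 1/2) * ((b-a)/m)" using dpos by (intro mult_nonneg_nonneg) auto
        show ?thesis unfolding c_def atLeastAtMost_iff using h1 h2 by linarith
      qed
      then have "c \<in> measure_support D" using S by simp
      then have "\<forall>U. open U \<and> c \<in> U \<longrightarrow> emeasure D U > 0" by (simp add: measure_support_def)
      moreover have "open (J j)" unfolding J_def by simp
      ultimately have "emeasure D (J j) > 0" using \<open>c \<in> J j\<close> by blast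
      then show "0 < measure D (J j)"
        using D.emeasure_eq_measure by (simp add: ennreal_less_zero_iff)
      show "measure D (J j) \<le> 1" using D.prob_le_1 .
    qed
    have "(\<lambda>n. (1 - measure D (J j)) ^ n) \<longlonglongrightarrow> 0" if "j < m" for j
      using pj[OF that] by (intro LIMSEQ_power_zero) auto
    then have "h \<longlonglongrightarrow> (b - a) * (\<Sum>j<m. 0)" unfolding h_def
      by (intro tendsto_mult tendsto_const tendsto_sum) auto
    then have "h \<longlonglongrightarrow> 0" by simp
    then have "eventually (\<lambda>n. h n < \<epsilon>/2) sequentially" using e by (intro order_tendstoD(2)) auto
    then obtain N where N: "\<And>n. n \<ge> N \<Longrightarrow> h n < \<epsilon>/2" unfolding eventually_sequentially by blast
    have "real m > 4*(b-a)/\<epsilon>" unfolding m_def by linarith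
    then have "4*(b-a) < real m * \<epsilon>" using e by (simp add: field_simps)
    then have m2: "2*((b-a)/m) < \<epsilon>/2" using m by (simp add: field_simps)
    show ?thesis
    proof (intro exI allI impI)
      fix n k :: nat assume "N < n" "1 \<le> k \<and> k \<le> n - 1"
      then have "(\<integral>\<omega>. order_stat n (k + 1) \<omega> - order_stat n k \<omega> \<partial>(PiM {..<n} (\<lambda>_. D)))
          \<le> 2*((b-a)/m) + h n" using bnd by blast
      moreover have "h n < \<epsilon>/2" using N \<open>N < n\<close> by simp
      ultimately show "(\<integral>\<omega>. order_stat n (k + 1) \<omega> - order_stat n k \<omega>
              \<partial>(PiM {..<n} (\<lambda>_. distr M borel X))) < \<epsilon>"
        using m2 unfolding D_def by linarith
    qed
  qed
qed

end
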